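(* Let $X$ be a complex Banach space, $0<\alpha<1$, let $A$ satisfy Condition (A), and let $0\le\beta\le1$. Then there exists $C=C(\beta)>0$ such that $\|J^{\beta}(G(\cdot)a)(t)\|\le Ct^{\beta}\|a\|$ for all $t>0$ and $a\in X$. In particular, $J^{\beta}(G(\cdot)a)\in L^{\infty}(0,T;X)$ for every $T>0$.
   Context: Condition (A) on $A:\mathcal{D}(A)\subset X\to X$: (i) closed, densely defined; (ii) $\Sigma_{\vartheta}:=\{z\in\mathbb{C}\setminus\{0\}:|\arg z|<\vartheta\}\subset\rho(A)$ for some $\vartheta\in(\pi/2,\pi)$; (iii) for every $\epsilon\in(0,\vartheta)$, $\|(\lambda-A)^{-1}\|\le C_\epsilon/|\lambda|$ for $\lambda\in\Sigma_{\vartheta-\epsilon}$; (iv) $0\in\rho(A)$. $J^{\beta}v(t)=\frac{1}{\Gamma(\beta)}\int_0^t(t-s)^{\beta-1}v(s)\,ds$ for $\beta>0$, $J^0=$ identity. For $t>0$, $G(t)a:=\frac{1}{2\pi i}\int_{\Gamma}e^{\lambda t}\lambda^{\alpha-1}(\lambda^{\alpha}-A)^{-1}a\,d\lambda$ (principal branches), $\Gamma=\{\rho e^{-i\vartheta}:\rho>1/t\}\cup\{t^{-1}e^{i\theta}:|\theta|\le\vartheta\}\cup\{\rho e^{i\vartheta}:\rho>1/t\}$ oriented from $\infty e^{-i\vartheta}$ to $\infty e^{i\vartheta}$. *)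

theory Defs
  imports "HOL-Analysis.Analysis"
begin

text \<open>A complex Banach space is modelled as a real Banach space together with a
  complex structure J (multiplication by the imaginary unit) compatible with the norm.\<close>

definition cscale :: "('a::real_vector \<Rightarrow> 'a) \<Rightarrow> complex \<Rightarrow> 'a \<Rightarrow> 'a" where
  "cscale J c x = Re c *\<^sub>R x + Im c *\<^sub>R J x"

definition complex_structure :: "('a::real_normed_vector \<Rightarrow> 'a) \<Rightarrow> bool" where
  "complex_structure J \<longleftrightarrow> linear J \<and> (\<forall>x. J (J x) = - x) \<and>
     (\<forall>c x. norm (cscale J c x) = cmod c * norm x)"

definition resolvent_set :: "('a::real_normed_vector \<Rightarrow> 'a) \<Rightarrow> 'a set \<Rightarrow> ('a \<Rightarrow> 'a) \<Rightarrow> complex set" where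
  "resolvent_set J D A = {z. (\<forall>y. \<exists>!x. x \<in> D \<and> cscale J z x - A x = y) \<and>
      (\<exists>K. \<forall>x\<in>D. norm x \<le> K * norm (cscale J z x - A x))}"

definition resolvent :: "('a::real_normed_vector \<Rightarrow> 'a) \<Rightarrow> 'a set \<Rightarrow> ('a \<Rightarrow> 'a) \<Rightarrow> complex \<Rightarrow> 'a \<Rightarrow> 'a" where
  "resolvent J D A z y = (THE x. x \<in> D \<and> cscale J z x - A x = y)"

definition sector :: "real \<Rightarrow> complex set" where
  "sector th = {z. z \<noteq> 0 \<and> \<bar>Arg z\<bar> < th}"

definition condA :: "('a::real_normed_vector \<Rightarrow> 'a) \<Rightarrow> 'a set \<Rightarrow> ('a \<Rightarrow> 'a) \<Rightarrow> real \<Rightarrow> bool" where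
  "condA J D A th \<longleftrightarrow>
     \<comment> \<open>(i) complex linear on a complex subspace, closed, densely defined\<close>
     subspace D \<and> (\<forall>x\<in>D. J x \<in> D) \<and>
     (\<forall>x\<in>D. \<forall>y\<in>D. A (x + y) = A x + A y) \<and>
     (\<forall>x\<in>D. \<forall>c. A (cscale J c x) = cscale J c (A x)) \<and>
     closed {(x, A x) | x. x \<in> D} \<and> closure D = UNIV \<and>
     \<comment> \<open>(ii)\<close>
     pi / 2 < th \<and> th < pi \<and> sector th \<subseteq> resolvent_set J D A \<and>
     \<comment> \<open>(iii)\<close>
     (\<forall>eps. 0 < eps \<and> eps < th \<longrightarrow> (\<exists>C. \<forall>z\<in>sector (th - eps). \<forall>y.
        norm (resolvent J D A z y) \<le> C / cmod z * norm y)) \<and>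
     \<comment> \<open>(iv)\<close>
     0 \<in> resolvent_set J D A"

text \<open>The operator G(t) defined by the contour integral over \<Gamma>, written out via the
  parametrisation of the three pieces of \<Gamma> (two rays, one arc).\<close>

definition Gint :: "('a::real_normed_vector \<Rightarrow> 'a) \<Rightarrow> 'a set \<Rightarrow> ('a \<Rightarrow> 'a) \<Rightarrow> real \<Rightarrow> real \<Rightarrow> complex \<Rightarrow> 'a \<Rightarrow> 'a" where
  "Gint J D A \<alpha> t z a =
     cscale J (exp (z * of_real t) * z powr of_real (\<alpha> - 1))
       (resolvent J D A (z powr of_real \<alpha>) a)"

definition G :: "('a::banach \<Rightarrow> 'a) \<Rightarrow> 'a set \<Rightarrow> ('a \<Rightarrow> 'a) \<Rightarrow> real \<Rightarrow> real \<Rightarrow> real \<Rightarrow> 'a \<Rightarrow> 'a" where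
  "G J D A \<alpha> th t a = cscale J (1 / (2 * of_real pi * \<i>))
     ( - integral {1/t..} (\<lambda>r. cscale J (exp (- \<i> * of_real th))
            (Gint J D A \<alpha> t (of_real r * exp (- \<i> * of_real th)) a))
       + integral {-th..th} (\<lambda>\<phi>. cscale J (\<i> * exp (\<i> * of_real \<phi>) / of_real t)
            (Gint J D A \<alpha> t (exp (\<i> * of_real \<phi>) / of_real t) a))
       + integral {1/t..} (\<lambda>r. cscale J (exp (\<i> * of_real th))
            (Gint J D A \<alpha> t (of_real r * exp (\<i> * of_real th)) a)))"

definition RL_int :: "real \<Rightarrow> (real \<Rightarrow> 'a::banach) \<Rightarrow> real \<Rightarrow> 'a" where
  "RL_int \<beta> v t = (if \<beta> = 0 then v t
     else integral {0..t} (\<lambda>s. ((t - s) powr (\<beta> - 1) / Gamma \<beta>) *\<^sub>R v s))"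

end

theory Submission imports Defs begin

lemma norm_cscale:
  assumes "complex_structure J"
  shows "norm (cscale J c x) = cmod c * norm x"
  using assms unfolding complex_structure_def by blast

lemma Arg_powr_real:
  fixes z :: complex
  assumes "z \<noteq> 0" "0 < \<alpha>" "\<alpha> < 1"
  shows "Arg (z powr of_real \<alpha>) = \<alpha> * Arg z"
proof -
  have a: "- pi < Arg z" "Arg z \<le> pi" by (rule mpi_less_Arg, rule Arg_le_pi)
  have "z powr of_real \<alpha> = exp (of_real \<alpha> * Ln z)" using assms by (simp add: powr_def)
  moreover have im: "Im (of_real \<alpha> * Ln z) = \<alpha> * Arg z" using assms by (simp add: Arg_eq_Im_Ln)
  moreover have "- pi < \<alpha> * Arg z"
  proof -
    have "\<alpha> * Arg z \<ge> \<alpha> * (-pi)" using a assms by (intro mult_left_mono) auto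
    moreover have "(1 - \<alpha>) * pi > 0" using assms pi_gt_zero by simp
    then have "\<alpha> * (-pi) > -pi" by (simp add: algebra_simps)
    ultimately show ?thesis by linarith
  qed
  moreover have "\<alpha> * Arg z \<le> pi"
  proof -
    have "\<alpha> * Arg z \<le> \<alpha> * pi" using a assms by (intro mult_left_mono) auto
    moreover have "(1 - \<alpha>) * pi > 0" using assms pi_gt_zero by simp
    then have "\<alpha> * pi \<le> pi" by (simp add: algebra_simps)
    ultimately show ?thesis by linarith
  qed
  ultimately show ?thesis
    apply (simp only:)
    apply (subst Arg_exp)
    using im by linarith+
qed

lemma Gint_bound:
  assumes cs: "complex_structure J" and K: "K \<ge> 0"
    and Rb: "\<forall>w\<in>sector S. \<forall>y. norm (resolvent J D A w y) \<le> K / cmod w * norm y"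
    and al: "0 < \<alpha>" "\<alpha> < 1" and z: "z \<noteq> 0" and arg: "\<alpha> * \<bar>Arg z\<bar> < S"
  shows "norm (Gint J D A \<alpha> t z a) \<le> K * exp (t * Re z) / cmod z * norm a"
proof -
  define w where "w = z powr of_real \<alpha>"
  have w0: "w \<noteq> 0" using z by (simp add: w_def powr_def)
  have "\<bar>Arg w\<bar> = \<alpha> * \<bar>Arg z\<bar>" using Arg_powr_real[OF z al] al by (simp add: w_def abs_mult)
  then have ws: "w \<in> sector S" using w0 arg by (simp add: sector_def)
  have nw: "cmod w = cmod z powr \<alpha>" by (simp add: w_def norm_powr_real_powr')
  have R: "norm (resolvent J D A w a) \<le> K / cmod z powr \<alpha> * norm a" using Rb ws nw by auto
  have n1: "cmod (exp (z * of_real t) * z powr of_real (\<alpha> - 1)) = exp (t * Re z) * cmod z powr (\<alpha> - 1)"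
    by (simp add: norm_mult norm_exp_eq_Re norm_powr_real_powr' mult.commute)
  have "norm (Gint J D A \<alpha> t z a) = exp (t * Re z) * cmod z powr (\<alpha> - 1) * norm (resolvent J D A w a)"
    unfolding Gint_def norm_cscale[OF cs] n1 w_def ..
  also have "\<dots> \<le> exp (t * Re z) * cmod z powr (\<alpha> - 1) * (K / cmod z powr \<alpha> * norm a)"
    by (intro mult_left_mono R) auto
  also have "\<dots> = K * exp (t * Re z) / cmod z * norm a"
  proof -
    have p: "cmod z powr (\<alpha> - 1) = cmod z powr \<alpha> / cmod z" using z by (simp add: powr_diff)
    have "cmod z powr \<alpha> > 0" using z by simp
    then show ?thesis unfolding p by (simp add: field_simps)
  qed
  finally show ?thesis .
qed


lemma int_bound_gen:
  fixes f :: "real \<Rightarrow> 'a::banach"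
  assumes "g integrable_on S" "\<And>x. x \<in> S \<Longrightarrow> norm (f x) \<le> g x" "0 \<le> integral S g"
  shows "norm (integral S f) \<le> integral S g"
proof (cases "f integrable_on S")
  case True then show ?thesis using assms integral_norm_bound_integral by blast
next
  case False then show ?thesis using assms by (simp add: not_integrable_integral)
qed

lemma ray_bound:
  fixes J :: "'a::banach \<Rightarrow> 'a"
  assumes cs: "complex_structure J" and K: "K \<ge> 0"
    and Rb: "\<forall>w\<in>sector S. \<forall>y. norm (resolvent J D A w y) \<le> K / cmod w * norm y"
    and al: "0 < \<alpha>" "\<alpha> < 1" and e: "cmod e = 1" "Re e = - c" "0 < c"
    and arg: "\<alpha> * \<bar>Arg e\<bar> < S" and t: "0 < t"
  shows "norm (integral {1/t..} (\<lambda>r. cscale J e (Gint J D A \<alpha> t (of_real r * e) a)))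
           \<le> K * exp (- c) / c * norm a"
proof -
  define g where "g r = K * norm a * t * exp (- (c * t) * r)" for r
  have hi: "(g has_integral (K * norm a * t) * (exp (- (c * t) * (1/t)) / (c * t))) {1/t..}"
    unfolding g_def using has_integral_exp_minus_to_infinity[of "c * t" "1/t"] e t
    by (intro has_integral_mult_right) auto
  have val: "(K * norm a * t) * (exp (- (c * t) * (1/t)) / (c * t)) = K * exp (- c) / c * norm a"
    using t e by (simp add: field_simps)
  have "norm (integral {1/t..} (\<lambda>r. cscale J e (Gint J D A \<alpha> t (of_real r * e) a))) \<le> integral {1/t..} g"
  proof (rule int_bound_gen)
    show "g integrable_on {1/t..}" using hi by blast
    show "0 \<le> integral {1/t..} g" using hi val K e by (simp add: integral_unique)
    fix r assume r: "r \<in> {1/t..}"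
    then have r1: "1/t \<le> r" by simp
    have rp: "r > 0" using r1 t by (smt (verit) divide_pos_pos)
    have "1 \<le> r * t" using r1 t by (simp add: divide_le_eq)
    then have "1 / r \<le> t" using rp by (simp add: divide_le_eq mult.commute)
    note r0 = rp this
    have e0: "e \<noteq> 0" using e by auto
    have z0: "of_real r * e \<noteq> 0" using r0 e0 by simp
    have "\<alpha> * \<bar>Arg (of_real r * e)\<bar> < S" using arg r0 by simp
    note B = Gint_bound[OF cs K Rb al z0 this, of t a]
    have nz: "cmod (of_real r * e) = r" using r0 e by (simp add: norm_mult)
    have rz: "Re (of_real r * e) = - c * r" using e by simp
    have "norm (cscale J e (Gint J D A \<alpha> t (of_real r * e) a)) = norm (Gint J D A \<alpha> t (of_real r * e) a)"
      by (simp add: norm_cscale[OF cs] e)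
    also have "\<dots> \<le> K * exp (t * (- c * r)) / r * norm a" using B nz rz by simp
    also have "\<dots> = (1 / r) * (K * norm a * exp (- (c * t) * r))" by (simp add: field_simps)
    also have "\<dots> \<le> t * (K * norm a * exp (- (c * t) * r))"
      using r0 K by (intro mult_right_mono) auto
    also have "\<dots> = g r" by (simp add: g_def)
    finally show "norm (cscale J e (Gint J D A \<alpha> t (of_real r * e) a)) \<le> g r" .
  qed
  also have "\<dots> = K * exp (- c) / c * norm a" using hi val by (simp add: integral_unique)
  finally show ?thesis .
qed

lemma arc_bound:
  fixes J :: "'a::banach \<Rightarrow> 'a"
  assumes cs: "complex_structure J" and K: "K \<ge> 0"
    and Rb: "\<forall>w\<in>sector S. \<forall>y. norm (resolvent J D A w y) \<le> K / cmod w * norm y"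
    and al: "0 < \<alpha>" "\<alpha> < 1" and th: "0 < th" "th < pi"
    and arg: "\<alpha> * th < S" and t: "0 < t"
  shows "norm (integral {-th..th} (\<lambda>\<phi>. cscale J (\<i> * exp (\<i> * of_real \<phi>) / of_real t)
            (Gint J D A \<alpha> t (exp (\<i> * of_real \<phi>) / of_real t) a)))
           \<le> (2 * th) * (K * exp 1 * norm a)"
proof -
  define g where "g (\<phi>::real) = K * exp 1 * norm a" for \<phi>
  have hi: "(g has_integral (2 * th) * (K * exp 1 * norm a)) {-th..th}"
    unfolding g_def using has_integral_const_real[of "K * exp 1 * norm a" "-th" th] th
    by simp
  have "norm (integral {-th..th} (\<lambda>\<phi>. cscale J (\<i> * exp (\<i> * of_real \<phi>) / of_real t)
            (Gint J D A \<alpha> t (exp (\<i> * of_real \<phi>) / of_real t) a))) \<le> integral {-th..th} g"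
  proof (rule int_bound_gen)
    show "g integrable_on {-th..th}" using hi by blast
    show "0 \<le> integral {-th..th} g" using hi K th by (simp add: integral_unique)
    fix \<phi> assume p: "\<phi> \<in> {-th..th}"
    define z where "z = exp (\<i> * of_real \<phi>) / of_real t"
    have z0: "z \<noteq> 0" using t by (simp add: z_def)
    have zz: "z = of_real (1/t) * exp (\<i> * of_real \<phi>)" by (simp add: z_def field_simps)
    have "Arg z = \<phi>" unfolding zz using t p th by (subst Arg_times_of_real) (auto simp: Arg_exp)
    then have "\<alpha> * \<bar>Arg z\<bar> < S"
      using p arg al by (smt (verit, best) atLeastAtMost_iff mult_left_mono)
    note B = Gint_bound[OF cs K Rb al z0 this, of t a]
    have nz: "cmod z = 1 / t" using t by (simp add: z_def norm_divide norm_exp_eq_Re)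
    have rz: "t * Re z = cos \<phi>" using t by (simp add: zz Re_exp)
    have "norm (cscale J (\<i> * exp (\<i> * of_real \<phi>) / of_real t) (Gint J D A \<alpha> t z a))
        = (1 / t) * norm (Gint J D A \<alpha> t z a)"
      using t by (simp add: norm_cscale[OF cs] norm_mult norm_divide)
    also have "\<dots> \<le> (1 / t) * (K * exp (cos \<phi>) / (1 / t) * norm a)"
      using B nz rz t by (intro mult_left_mono) auto
    also have "\<dots> = K * exp (cos \<phi>) * norm a" using t by simp
    also have "\<dots> \<le> K * exp 1 * norm a"
      using K by (intro mult_right_mono mult_left_mono) auto
    finally show "norm (cscale J (\<i> * exp (\<i> * of_real \<phi>) / of_real t)
            (Gint J D A \<alpha> t (exp (\<i> * of_real \<phi>) / of_real t) a)) \<le> g \<phi>"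
      by (simp add: g_def z_def)
  qed
  also have "\<dots> = (2 * th) * (K * exp 1 * norm a)" using hi by (simp add: integral_unique)
  finally show ?thesis .
qed


lemma G_bound:
  fixes J :: "'a::banach \<Rightarrow> 'a"
  assumes cs: "complex_structure J" and al: "0 < \<alpha>" "\<alpha> < 1" and A: "condA J D A th"
  shows "\<exists>CG\<ge>0. \<forall>t>0. \<forall>a. norm (G J D A \<alpha> th t a) \<le> CG * norm a"
proof -
  have th: "pi / 2 < th" "th < pi" using A by (auto simp: condA_def)
  have th0: "0 < th" using th pi_gt_zero by linarith
  define eps where "eps = (1 - \<alpha>) * th / 2"
  have "0 < \<alpha> * th" using al th0 by simp
  moreover have "(1 - \<alpha>) * th = th - \<alpha> * th" by (simp add: algebra_simps)
  moreover have "\<alpha> * th < th" using al th0 by simp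
  ultimately have eps1: "0 < eps" "eps < th" unfolding eps_def by linarith+
  note eps = eps1
  then obtain C where C: "\<forall>z\<in>sector (th - eps). \<forall>y. norm (resolvent J D A z y) \<le> C / cmod z * norm y"
    using A unfolding condA_def by blast
  define K where "K = \<bar>C\<bar>"
  have K: "K \<ge> 0" by (simp add: K_def)
  have Rb: "\<forall>w\<in>sector (th - eps). \<forall>y. norm (resolvent J D A w y) \<le> K / cmod w * norm y"
  proof (intro ballI allI)
    fix w :: complex and y :: 'a assume w: "w \<in> sector (th - eps)"
    have "C / cmod w * norm y \<le> K / cmod w * norm y"
      unfolding K_def by (intro mult_right_mono divide_right_mono) auto
    then show "norm (resolvent J D A w y) \<le> K / cmod w * norm y" using C w by (meson order_trans)
  qed
  have arg: "\<alpha> * th < th - eps" using al th0 by (simp add: eps_def field_simps)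
  define c where "c = - cos th"
  have c: "0 < c" unfolding c_def using th cos_gt_zero_pi[of "pi - th"] by (simp add: cos_pi_minus)
  define ep where "ep = exp (\<i> * of_real th)"
  define em where "em = exp (- \<i> * of_real th)"
  have ep: "cmod ep = 1" "Re ep = - c" "\<alpha> * \<bar>Arg ep\<bar> < th - eps"
    using th0 th arg by (auto simp: ep_def c_def norm_exp_eq_Re Re_exp Arg_exp)
  have em: "cmod em = 1" "Re em = - c" "\<alpha> * \<bar>Arg em\<bar> < th - eps"
    using th0 th arg by (auto simp: em_def c_def norm_exp_eq_Re Re_exp Arg_exp)
  define CG where "CG = (2 * (K * exp (- c) / c) + (2 * th) * (K * exp 1)) / (2 * pi)"
  have CG: "CG \<ge> 0" using K c th0 by (auto simp: CG_def intro!: divide_nonneg_pos add_nonneg_nonneg mult_nonneg_nonneg)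
  show ?thesis
  proof (intro exI[of _ CG] conjI CG allI impI)
    fix t :: real and a assume t: "0 < t"
    define I1 where "I1 = integral {1/t..} (\<lambda>r. cscale J em (Gint J D A \<alpha> t (of_real r * em) a))"
    define I2 where "I2 = integral {-th..th} (\<lambda>\<phi>. cscale J (\<i> * exp (\<i> * of_real \<phi>) / of_real t)
            (Gint J D A \<alpha> t (exp (\<i> * of_real \<phi>) / of_real t) a))"
    define I3 where "I3 = integral {1/t..} (\<lambda>r. cscale J ep (Gint J D A \<alpha> t (of_real r * ep) a))"
    have b1: "norm I1 \<le> K * exp (- c) / c * norm a"
      unfolding I1_def by (rule ray_bound[OF cs K Rb al em(1,2) c em(3) t])
    have b3: "norm I3 \<le> K * exp (- c) / c * norm a"
      unfolding I3_def by (rule ray_bound[OF cs K Rb al ep(1,2) c ep(3) t])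
    have b2: "norm I2 \<le> (2 * th) * (K * exp 1 * norm a)"
      unfolding I2_def by (rule arc_bound[OF cs K Rb al th0 th(2) arg t])
    have "G J D A \<alpha> th t a = cscale J (1 / (2 * of_real pi * \<i>)) (- I1 + I2 + I3)"
      unfolding G_def I1_def I2_def I3_def em_def ep_def by simp
    then have "norm (G J D A \<alpha> th t a) = (1 / (2 * pi)) * norm (- I1 + I2 + I3)"
      by (simp add: norm_cscale[OF cs] norm_divide norm_mult)
    also have "\<dots> \<le> (1 / (2 * pi)) * (norm I1 + norm I2 + norm I3)"
    proof (intro mult_left_mono)
      have "norm (- I1 + I2 + I3) \<le> norm (- I1 + I2) + norm I3" by (rule norm_triangle_ineq)
      moreover have "norm (- I1 + I2) \<le> norm (- I1) + norm I2" by (rule norm_triangle_ineq)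
      ultimately show "norm (- I1 + I2 + I3) \<le> norm I1 + norm I2 + norm I3" by simp
    qed simp
    also have "\<dots> \<le> (1 / (2 * pi)) * (K * exp (- c) / c * norm a + (2 * th) * (K * exp 1 * norm a) + K * exp (- c) / c * norm a)"
      apply (rule mult_left_mono) using b1 b2 b3 apply linarith by simp
    also have "\<dots> = CG * norm a" by (simp add: CG_def field_simps)
    finally show "norm (G J D A \<alpha> th t a) \<le> CG * norm a" .
  qed
qed

lemma powr_reflect_integral:
  fixes \<beta> t :: real
  assumes b: "0 < \<beta>" and t: "0 \<le> t"
  shows "((\<lambda>s. (t - s) powr (\<beta> - 1)) has_integral (t powr \<beta> / \<beta>)) {0..t}"
proof -
  have h: "((\<lambda>x. x powr (\<beta> - 1)) has_integral (t powr \<beta> / \<beta>)) (cbox 0 t)"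
    using has_integral_powr_from_0[of "\<beta> - 1" t] b t by simp
  have "((\<lambda>x. ((-1) *\<^sub>R x + t) powr (\<beta> - 1)) has_integral (1 / \<bar>-1\<bar> ^ DIM(real)) *\<^sub>R (t powr \<beta> / \<beta>))
     ((\<lambda>x. (1 / (-1)) *\<^sub>R x + - ((1 / (-1)) *\<^sub>R t)) ` cbox 0 t)"
    by (rule has_integral_affinity[OF h]) simp
  moreover have "(\<lambda>x. (1 / (-1)) *\<^sub>R x + - ((1 / (-1)) *\<^sub>R t)) ` cbox 0 t = {0..t}"
  proof -
    have "(\<lambda>x::real. t - x) ` {0..t} = {0..t}"
      by (auto simp: image_iff intro!: bexI[where x="t - x" for x])
    then show ?thesis by simp
  qed
  ultimately show ?thesis by simp
qed

lemma RL_bound: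
  fixes v :: "real \<Rightarrow> 'a::banach"
  assumes b: "0 < \<beta>" and t: "0 < t" and B: "B \<ge> 0" and v: "\<And>s. s > 0 \<Longrightarrow> norm (v s) \<le> B"
  shows "norm (RL_int \<beta> v t) \<le> B / (Gamma \<beta> * \<beta>) * t powr \<beta>"
proof -
  have G0: "Gamma \<beta> > 0" using b by (rule Gamma_real_pos)
  define f where "f s = ((t - s) powr (\<beta> - 1) / Gamma \<beta>) *\<^sub>R v s" for s
  define g where "g s = B / Gamma \<beta> * (t - s) powr (\<beta> - 1)" for s
  define g' where "g' s = (if s = 0 then norm (f 0) else g s)" for s
  have hg: "(g has_integral (B / Gamma \<beta> * (t powr \<beta> / \<beta>))) {0..t}"
    unfolding g_def using powr_reflect_integral[OF b, of t] t by (intro has_integral_mult_right) auto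
  have hg': "(g' has_integral (B / Gamma \<beta> * (t powr \<beta> / \<beta>))) {0..t}"
    by (rule has_integral_spike_finite[of "{0}", OF _ _ hg]) (auto simp: g'_def)
  have val: "B / Gamma \<beta> * (t powr \<beta> / \<beta>) = B / (Gamma \<beta> * \<beta>) * t powr \<beta>" by simp
  have "norm (integral {0..t} f) \<le> integral {0..t} g'"
  proof (rule int_bound_gen)
    show "g' integrable_on {0..t}" using hg' by blast
    show "0 \<le> integral {0..t} g'" using hg' B G0 b by (simp add: integral_unique)
    fix s assume s: "s \<in> {0..t}"
    show "norm (f s) \<le> g' s"
    proof (cases "s = 0")
      case True then show ?thesis by (simp add: g'_def)
    next
      case False
      then have "s > 0" using s by auto
      then have "norm (f s) = (t - s) powr (\<beta> - 1) / Gamma \<beta> * norm (v s)"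
        using G0 by (simp add: f_def)
      also have "\<dots> \<le> (t - s) powr (\<beta> - 1) / Gamma \<beta> * B"
        using v[OF \<open>s > 0\<close>] G0 by (intro mult_left_mono) auto
      also have "\<dots> = g' s" using False by (simp add: g'_def g_def)
      finally show ?thesis .
    qed
  qed
  also have "\<dots> = B / (Gamma \<beta> * \<beta>) * t powr \<beta>" using hg' val by (simp add: integral_unique)
  moreover have "RL_int \<beta> v t = integral {0..t} f" using b by (simp add: RL_int_def f_def[abs_def])
  ultimately show ?thesis by simp
qed

theorem lemma3p3:
  fixes J :: "'a::banach \<Rightarrow> 'a" and A :: "'a \<Rightarrow> 'a" and D :: "'a set"
    and \<alpha> \<beta> th :: real
  assumes "complex_structure J"
    and "0 < \<alpha>" and "\<alpha> < 1"
    and "condA J D A th"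
    and "0 \<le> \<beta>" and "\<beta> \<le> 1"
  shows "\<exists>C>0. (\<forall>t>0. \<forall>a. norm (RL_int \<beta> (\<lambda>s. G J D A \<alpha> th s a) t) \<le> C * t powr \<beta> * norm a)
           \<and> (\<forall>T>0. \<forall>a. \<exists>M. \<forall>t\<in>{0<..<T}. norm (RL_int \<beta> (\<lambda>s. G J D A \<alpha> th s a) t) \<le> M)"
proof -
  obtain CG where CG: "CG \<ge> 0" "\<And>t a. t > 0 \<Longrightarrow> norm (G J D A \<alpha> th t a) \<le> CG * norm a"
    using G_bound[OF assms(1-4)] by blast
  have main: "\<exists>C>0. \<forall>t>0. \<forall>a. norm (RL_int \<beta> (\<lambda>s. G J D A \<alpha> th s a) t) \<le> C * t powr \<beta> * norm a"
  proof (cases "\<beta> = 0")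
    case True
    show ?thesis
    proof (intro exI[of _ "max CG 1"] conjI allI impI)
      fix t :: real and a assume t: "0 < t"
      have "norm (G J D A \<alpha> th t a) \<le> max CG 1 * norm a"
        using CG(2)[OF t, of a] by (meson max.cobounded1 mult_right_mono norm_ge_zero order_trans)
      then show "norm (RL_int \<beta> (\<lambda>s. G J D A \<alpha> th s a) t) \<le> max CG 1 * t powr \<beta> * norm a"
        using True t by (simp add: RL_int_def)
    qed simp
  next
    case False
    then have b: "0 < \<beta>" using assms(5) by simp
    have G0: "Gamma \<beta> > 0" using b by (rule Gamma_real_pos)
    define C where "C = max (CG / (Gamma \<beta> * \<beta>)) 1"
    show ?thesis
    proof (intro exI[of _ C] conjI allI impI)
      show "0 < C" by (simp add: C_def)
      fix t :: real and a assume t: "0 < t"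
      have "norm (RL_int \<beta> (\<lambda>s. G J D A \<alpha> th s a) t) \<le> CG * norm a / (Gamma \<beta> * \<beta>) * t powr \<beta>"
        by (rule RL_bound[OF b t]) (use CG in auto)
      also have "\<dots> = (CG / (Gamma \<beta> * \<beta>)) * t powr \<beta> * norm a" by simp
      also have "\<dots> \<le> C * t powr \<beta> * norm a"
        unfolding C_def by (intro mult_right_mono) auto
      finally show "norm (RL_int \<beta> (\<lambda>s. G J D A \<alpha> th s a) t) \<le> C * t powr \<beta> * norm a" .
    qed
  qed
  then obtain C where C: "C > 0" "\<And>t a. t > 0 \<Longrightarrow> norm (RL_int \<beta> (\<lambda>s. G J D A \<alpha> th s a) t) \<le> C * t powr \<beta> * norm a"
    by blast
  show ?thesis
  proof (rule exI[of _ C], intro conjI allI impI C(1))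
    fix t :: real and a assume "0 < t" then show "norm (RL_int \<beta> (\<lambda>s. G J D A \<alpha> th s a) t) \<le> C * t powr \<beta> * norm a" by (rule C(2))
  next
    fix T :: real and a assume T: "0 < T"
    show "\<exists>M. \<forall>t\<in>{0<..<T}. norm (RL_int \<beta> (\<lambda>s. G J D A \<alpha> th s a) t) \<le> M"
    proof (intro exI[of _ "C * T powr \<beta> * norm a"] ballI)
      fix t :: real assume t: "t \<in> {0<..<T}"
      have "t powr \<beta> \<le> T powr \<beta>" using t assms(5) by (intro powr_mono2) auto
      then have "C * t powr \<beta> * norm a \<le> C * T powr \<beta> * norm a"
        using C(1) by (intro mult_right_mono mult_left_mono) auto
      then show "norm (RL_int \<beta> (\<lambda>s. G J D A \<alpha> th s a) t) \<le> C * T powr \<beta> * norm a"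
        using C(2)[of t a] t by auto
    qed
  qed
qed

end
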